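(* Let $(\Omega,\mathcal{F},\mathbb{P},\{\mathcal{F}_t\})$ be a filtered complete probability space satisfying the usual hypotheses, let $U<\infty$, and let $\{X_t\}_{0\le t\le U}$ be a Markov process generating $\{\mathcal{F}_t\}$. Let $\{M_t\}_{0\le t<U}$ be an $\{\mathcal{F}_t\}$-adapted $\mathbb{P}$-martingale that induces a change of measure from $\mathbb{P}$ to an equivalent auxiliary probability measure $\mathbb{M}$ with respect to which the Markov property of $\{X_t\}$ is preserved. Let (i) $f_0(t)$ and $f_1(t)$ be deterministic, positive and non-increasing functions, (ii) $F(t,x)$ be a measurable positive function, and (iii) $w(t,u)$ be a positive measurable function satisfying $w(t,u-s)\le w(t-s,u)$ for $s\le t\wedge u$. Define, for $0\le t\le T<U$, \[ Y^{\mathbb{M}}_{tT}=\int_{T-t}^{U-t}\mathbb{E}^{\mathbb{M}}\left[F(t+u,X_{t+u})\,\vert\,X_t\right]\,w(T,u-T+t)\,\mathrm{d}u, \] where $F$ and $w$ are such that $Y^{\mathbb{M}}_{tT}<\infty$ for all $t$. Set $\pi_0=1+f_1(0)Y^{\mathbb{M}}_{00}$, \[ P_{0t}=\frac{f_0(t)+f_1(t)Y^{\mathbb{M}}_{0t}}{1+f_1(0)Y^{\mathbb{M}}_{00}},\qquad y^{\mathbb{M}}(t)=\frac{f_1(t)}{1+f_1(0)Y^{\mathbb{M}}_{00}}. \] Then the process \[ \pi_t=\frac{\pi_0}{M_0}\left[P_{0t}+y^{\mathbb{M}}(t)\left(Y^{\mathbb{M}}_{tt}-Y^{\mathbb{M}}_{0t}\right)\right]M_t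 \] is a positive $(\{\mathcal{F}_t\},\mathbb{P})$-supermartingale. Moreover, taking this $\{\pi_t\}$ as the pricing kernel, the discount bond price process $P_{tT}=\pi_t^{-1}\mathbb{E}^{\mathbb{P}}[\pi_T\,\vert\,\mathcal{F}_t]$ is given, for $0\le t\le T<U$, by \[ P_{tT}=\frac{P_{0T}+y^{\mathbb{M}}(T)\left(Y^{\mathbb{M}}_{tT}-Y^{\mathbb{M}}_{0T}\right)}{P_{0t}+y^{\mathbb{M}}(t)\left(Y^{\mathbb{M}}_{tt}-Y^{\mathbb{M}}_{0t}\right)}. \]
   Context: The market filtration $\{\mathcal{F}_t\}$ is the natural filtration of $\{X_t\}$, and $\{X_t\}$ is Markov with respect to it. For a pricing kernel $\{\pi_t\}$, the price at time $t$ of a discount bond with maturity $T$ is $P_{tT}=\frac{1}{\pi_t}\mathbb{E}^{\mathbb{P}}[\pi_T\mid\mathcal{F}_t]$. *)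

theory Defs
  imports "HOL-Probability.Probability"
begin

definition aug_nat_filtration ::
  "'a measure \<Rightarrow> 'b measure \<Rightarrow> (real \<Rightarrow> 'a \<Rightarrow> 'b) \<Rightarrow> real \<Rightarrow> 'a measure" where
  "aug_nat_filtration P S X t =
     sigma (space P) ({X s -` B \<inter> space P | s B. 0 \<le> s \<and> s \<le> t \<and> B \<in> sets S} \<union> null_sets P)"

definition sigma_of :: "'a measure \<Rightarrow> 'b measure \<Rightarrow> ('a \<Rightarrow> 'b) \<Rightarrow> 'a measure" where
  "sigma_of P S Y = vimage_algebra (space P) Y S"

definition markov_on ::
  "'a measure \<Rightarrow> 'b measure \<Rightarrow> (real \<Rightarrow> 'a measure) \<Rightarrow> (real \<Rightarrow> 'a \<Rightarrow> 'b) \<Rightarrow> real \<Rightarrow> bool" where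
  "markov_on Q S Fs X U \<longleftrightarrow>
     (\<forall>s t. 0 \<le> s \<longrightarrow> s \<le> t \<longrightarrow> t \<le> U \<longrightarrow>
        (\<forall>g \<in> borel_measurable S.
           AE \<omega> in Q. nn_cond_exp Q (Fs s) (\<lambda>\<omega>. g (X t \<omega>)) \<omega>
                    = nn_cond_exp Q (sigma_of Q S (X s)) (\<lambda>\<omega>. g (X t \<omega>)) \<omega>))"

definition martingale_on ::
  "'a measure \<Rightarrow> (real \<Rightarrow> 'a measure) \<Rightarrow> real set \<Rightarrow> (real \<Rightarrow> 'a \<Rightarrow> real) \<Rightarrow> bool" where
  "martingale_on P Fs I Z \<longleftrightarrow>
     (\<forall>t\<in>I. integrable P (Z t) \<and> Z t \<in> borel_measurable (Fs t)) \<and>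
     (\<forall>s\<in>I. \<forall>t\<in>I. s \<le> t \<longrightarrow> (AE \<omega> in P. real_cond_exp P (Fs s) (Z t) \<omega> = Z s \<omega>))"

definition supermartingale_on ::
  "'a measure \<Rightarrow> (real \<Rightarrow> 'a measure) \<Rightarrow> real set \<Rightarrow> (real \<Rightarrow> 'a \<Rightarrow> real) \<Rightarrow> bool" where
  "supermartingale_on P Fs I Z \<longleftrightarrow>
     (\<forall>t\<in>I. integrable P (Z t) \<and> Z t \<in> borel_measurable (Fs t)) \<and>
     (\<forall>s\<in>I. \<forall>t\<in>I. s \<le> t \<longrightarrow> (AE \<omega> in P. real_cond_exp P (Fs s) (Z t) \<omega> \<le> Z s \<omega>))"

text \<open>The quantity Y^M_{tT}(omega), where C t u is a (jointly measurable) version of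
  E^M[F(t+u, X_{t+u}) | X_t].\<close>
definition Yenn :: "(real \<Rightarrow> real \<Rightarrow> 'a \<Rightarrow> ennreal) \<Rightarrow> (real \<Rightarrow> real \<Rightarrow> real) \<Rightarrow> real
                      \<Rightarrow> real \<Rightarrow> real \<Rightarrow> 'a \<Rightarrow> ennreal" where
  "Yenn C w U t T \<omega> = (\<integral>\<^sup>+ u \<in> {T - t..U - t}. C t u \<omega> * ennreal (w T (u - T + t)) \<partial>lborel)"

definition Yr :: "(real \<Rightarrow> real \<Rightarrow> 'a \<Rightarrow> ennreal) \<Rightarrow> (real \<Rightarrow> real \<Rightarrow> real) \<Rightarrow> real
                      \<Rightarrow> real \<Rightarrow> real \<Rightarrow> 'a \<Rightarrow> real" where
  "Yr C w U t T \<omega> = enn2real (Yenn C w U t T \<omega>)"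

end

theory Submission
  imports Defs
begin


lemma cond_fubini_AE:
  fixes Q G :: "'a measure" and c :: "real \<Rightarrow> 'a \<Rightarrow> ennreal"
  assumes Q: "prob_space Q" and sub: "subalgebra Q G"
    and cm: "(\<lambda>(u,\<omega>). c u \<omega>) \<in> borel_measurable (lborel \<Otimes>\<^sub>M Q)"
    and cG: "\<And>u. c u \<in> borel_measurable G"
  shows "AE \<omega> in Q. (\<integral>\<^sup>+u. c u \<omega> \<partial>lborel) = nn_cond_exp Q G (\<lambda>\<omega>. \<integral>\<^sup>+u. c u \<omega> \<partial>lborel) \<omega>"
proof -
  interpret prob_space Q by fact
  interpret fms: finite_measure_subalgebra Q G
    by unfold_locales (rule sub)
  interpret pair_sigma_finite lborel Q ..
  define Y where "Y = (\<lambda>\<omega>. \<integral>\<^sup>+u. c u \<omega> \<partial>lborel)"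
  have cm': "(\<lambda>(\<omega>,u). c u \<omega>) \<in> borel_measurable (Q \<Otimes>\<^sub>M lborel)"
    using measurable_pair_swap[OF cm] by simp
  have Ym[measurable]: "Y \<in> borel_measurable Q"
    unfolding Y_def using lborel.borel_measurable_nn_integral[OF cm'] by simp
  have cu: "(\<lambda>u. c u \<omega>) \<in> borel_measurable lborel" if "\<omega> \<in> space Q" for \<omega>
    using measurable_comp[OF measurable_Pair2'[OF that] cm] by (simp add: comp_def)
  have cQ[measurable]: "c u \<in> borel_measurable Q" for u
    using measurable_from_subalg[OF sub cG] .
  define N where "N = nn_cond_exp Q G Y"
  have Nm[measurable]: "N \<in> borel_measurable Q" "N \<in> borel_measurable G"
    unfolding N_def by simp_all
  have eq: "(\<integral>\<^sup>+\<omega>. Y \<omega> * indicator A \<omega> \<partial>Q) = (\<integral>\<^sup>+\<omega>. N \<omega> * indicator A \<omega> \<partial>Q)"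
    if A[measurable]: "A \<in> sets Q" for A
  proof -
    define NA where "NA = nn_cond_exp Q G (indicator A)"
    have NAm[measurable]: "NA \<in> borel_measurable Q" "NA \<in> borel_measurable G"
      unfolding NA_def by simp_all
    have m1: "(\<lambda>(u,\<omega>). c u \<omega> * indicator A \<omega>) \<in> borel_measurable (lborel \<Otimes>\<^sub>M Q)"
      using cm by measurable
    have m2: "(\<lambda>(u,\<omega>). c u \<omega> * NA \<omega>) \<in> borel_measurable (lborel \<Otimes>\<^sub>M Q)"
      using cm by measurable
    have "(\<integral>\<^sup>+\<omega>. Y \<omega> * indicator A \<omega> \<partial>Q) = (\<integral>\<^sup>+\<omega>. \<integral>\<^sup>+u. c u \<omega> * indicator A \<omega> \<partial>lborel \<partial>Q)"
      unfolding Y_def by (intro nn_integral_cong) (simp add: nn_integral_multc[OF cu])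
    also have "\<dots> = (\<integral>\<^sup>+u. \<integral>\<^sup>+\<omega>. c u \<omega> * indicator A \<omega> \<partial>Q \<partial>lborel)"
      using Fubini'[of "\<lambda>u \<omega>. c u \<omega> * indicator A \<omega>"] m1 by simp
    also have "\<dots> = (\<integral>\<^sup>+u. \<integral>\<^sup>+\<omega>. c u \<omega> * NA \<omega> \<partial>Q \<partial>lborel)"
      unfolding NA_def by (simp add: fms.nn_cond_exp_intg[OF cG])
    also have "\<dots> = (\<integral>\<^sup>+\<omega>. \<integral>\<^sup>+u. c u \<omega> * NA \<omega> \<partial>lborel \<partial>Q)"
      using Fubini'[of "\<lambda>u \<omega>. c u \<omega> * NA \<omega>"] m2 by simp
    also have "\<dots> = (\<integral>\<^sup>+\<omega>. NA \<omega> * Y \<omega> \<partial>Q)"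
      unfolding Y_def by (intro nn_integral_cong) (simp add: nn_integral_cmult[OF cu] mult.commute)
    also have "\<dots> = (\<integral>\<^sup>+\<omega>. NA \<omega> * N \<omega> \<partial>Q)"
      unfolding N_def by (simp add: fms.nn_cond_exp_intg)
    also have "\<dots> = (\<integral>\<^sup>+\<omega>. N \<omega> * NA \<omega> \<partial>Q)"
      by (simp add: mult.commute)
    also have "\<dots> = (\<integral>\<^sup>+\<omega>. N \<omega> * indicator A \<omega> \<partial>Q)"
      unfolding NA_def by (simp add: fms.nn_cond_exp_intg)
    finally show ?thesis .
  qed
  have "density Q Y = density Q N"
    by (rule measure_eqI) (auto simp: emeasure_density eq)
  then have "AE \<omega> in Q. Y \<omega> = N \<omega>"
    by (rule sigma_finite_measure.density_unique[OF prob_space_imp_sigma_finite[OF Q] Ym Nm(1)])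
  then show ?thesis unfolding Y_def N_def by simp
qed




locale setting =
  fixes P Q :: "'a measure" and S :: "'b measure"
    and X :: "real \<Rightarrow> 'a \<Rightarrow> 'b" and Fs :: "real \<Rightarrow> 'a measure"
    and Mg :: "real \<Rightarrow> 'a \<Rightarrow> real" and U :: real
    and f0 f1 :: "real \<Rightarrow> real" and F :: "real \<Rightarrow> 'b \<Rightarrow> real"
    and w :: "real \<Rightarrow> real \<Rightarrow> real"
    and C :: "real \<Rightarrow> real \<Rightarrow> 'a \<Rightarrow> ennreal"
    and Y :: "real \<Rightarrow> real \<Rightarrow> 'a \<Rightarrow> real"
    and pi0 :: "'a \<Rightarrow> real" and P0 yM :: "real \<Rightarrow> 'a \<Rightarrow> real"
    and pk :: "real \<Rightarrow> 'a \<Rightarrow> real"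
  assumes P_prob: "prob_space P"
    and P_complete: "complete_measure P"
    and U_pos: "0 < U"
    and X_meas: "\<forall>t\<in>{0..U}. X t \<in> measurable P S"
    and X0_det: "\<exists>x0\<in>space S. AE \<omega> in P. X 0 \<omega> = x0"
    and Fs_def: "\<forall>t. Fs t = aug_nat_filtration P S X t"
    and Fs_rcont: "\<forall>t\<in>{0..<U}. sets (Fs t) = (\<Inter>s\<in>{t<..U}. sets (Fs s))"
    and X_markov_P: "markov_on P S Fs X U"
    and Mg_mart: "martingale_on P Fs {0..<U} Mg"
    and Mg_pos: "\<forall>t\<in>{0..<U}. AE \<omega> in P. 0 < Mg t \<omega>"
    and Q_prob: "prob_space Q"
    and Q_space: "space Q = space P"
    and Q_sets: "sets Q = sets P"
    and Q_equiv: "\<forall>A\<in>sets P. emeasure P A = 0 \<longleftrightarrow> emeasure Q A = 0"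
    and Q_density: "\<forall>t\<in>{0..<U}. \<forall>A\<in>sets (Fs t).
                      emeasure Q A = (\<integral>\<^sup>+ \<omega> \<in> A. ennreal (Mg t \<omega> / Mg 0 \<omega>) \<partial>P)"
    and X_markov_Q: "markov_on Q S Fs X U"
    and f0_pos: "\<forall>t\<in>{0..<U}. 0 < f0 t"
    and f1_pos: "\<forall>t\<in>{0..<U}. 0 < f1 t"
    and f0_noninc: "\<forall>s t. 0 \<le> s \<longrightarrow> s \<le> t \<longrightarrow> t < U \<longrightarrow> f0 t \<le> f0 s"
    and f1_noninc: "\<forall>s t. 0 \<le> s \<longrightarrow> s \<le> t \<longrightarrow> t < U \<longrightarrow> f1 t \<le> f1 s"
    and F_meas: "(\<lambda>(t, x). F t x) \<in> borel_measurable (borel \<Otimes>\<^sub>M S)"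
    and F_pos: "\<forall>t\<in>{0..U}. \<forall>x\<in>space S. 0 < F t x"
    and w_meas: "(\<lambda>(t, u). w t u) \<in> borel_measurable (borel \<Otimes>\<^sub>M borel)"
    and w_pos: "\<forall>t u. 0 \<le> t \<longrightarrow> 0 \<le> u \<longrightarrow> 0 < w t u"
    and w_ineq: "\<forall>t u s. 0 \<le> s \<longrightarrow> s \<le> t \<longrightarrow> s \<le> u \<longrightarrow> w t (u - s) \<le> w (t - s) u"
    and C_meas: "\<forall>t\<in>{0..U}. (\<lambda>(u, \<omega>). C t u \<omega>) \<in> borel_measurable (lborel \<Otimes>\<^sub>M P)"
    and C_version: "\<forall>t u. 0 \<le> t \<longrightarrow> 0 \<le> u \<longrightarrow> t + u \<le> U \<longrightarrow>
           C t u \<in> borel_measurable (sigma_of Q S (X t)) \<and>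
           (AE \<omega> in Q. C t u \<omega> =
              nn_cond_exp Q (sigma_of Q S (X t)) (\<lambda>\<omega>. ennreal (F (t + u) (X (t + u) \<omega>))) \<omega>)"
    and Y_finite: "\<forall>t T. 0 \<le> t \<longrightarrow> t \<le> T \<longrightarrow> T < U \<longrightarrow> (AE \<omega> in P. Yenn C w U t T \<omega> < \<infinity>)"
    and Y_def: "Y = Yr C w U"
    and pi0_def: "pi0 = (\<lambda>\<omega>. 1 + f1 0 * Y 0 0 \<omega>)"
    and P0_def: "P0 = (\<lambda>t \<omega>. (f0 t + f1 t * Y 0 t \<omega>) / (1 + f1 0 * Y 0 0 \<omega>))"
    and yM_def: "yM = (\<lambda>t \<omega>. f1 t / (1 + f1 0 * Y 0 0 \<omega>))"
    and pk_def: "pk = (\<lambda>t \<omega>. pi0 \<omega> / Mg 0 \<omega> *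
                          (P0 t \<omega> + yM t \<omega> * (Y t t \<omega> - Y 0 t \<omega>)) * Mg t \<omega>)"
begin

interpretation Pp: prob_space P by (rule P_prob)
interpretation Qp: prob_space Q by (rule Q_prob)

lemma gen_sub:
  assumes "t \<le> U"
  shows "{X s -` B \<inter> space P | s B. 0 \<le> s \<and> s \<le> t \<and> B \<in> sets S} \<union> null_sets P \<subseteq> sets P"
proof -
  have "X s -` B \<inter> space P \<in> sets P" if "0 \<le> s" "s \<le> t" "B \<in> sets S" for s B
    using X_meas that assms by (intro measurable_sets[of _ P S]) auto
  then show ?thesis by auto
qed

lemma space_Fs[simp]: "space (Fs t) = space P"
  unfolding Fs_def[rule_format] aug_nat_filtration_def by (simp add: space_measure_of_conv)

lemma sets_Fs: "t \<le> U \<Longrightarrow> sets (Fs t) =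
   sigma_sets (space P) ({X s -` B \<inter> space P | s B. 0 \<le> s \<and> s \<le> t \<and> B \<in> sets S} \<union> null_sets P)"
  unfolding Fs_def[rule_format] aug_nat_filtration_def
  by (rule sets_measure_of) (use gen_sub sets.sets_into_space in blast)

lemma sets_Fs_sub: "t \<le> U \<Longrightarrow> sets (Fs t) \<subseteq> sets P"
  by (simp add: sets_Fs) (rule sets.sigma_sets_subset[OF gen_sub])

lemma sub_P: "t \<le> U \<Longrightarrow> subalgebra P (Fs t)"
  unfolding subalgebra_def using sets_Fs_sub by simp

lemma sub_Q: "t \<le> U \<Longrightarrow> subalgebra Q (Fs t)"
  unfolding subalgebra_def using sets_Fs_sub Q_sets Q_space by simp

lemma sfs_P: "t \<le> U \<Longrightarrow> sigma_finite_subalgebra P (Fs t)"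
  by (rule finite_measure_subalgebra_is_sigma_finite)
     (simp add: finite_measure_subalgebra_def finite_measure_subalgebra_axioms_def sub_P Pp.finite_measure_axioms)

lemma sfs_Q: "t \<le> U \<Longrightarrow> sigma_finite_subalgebra Q (Fs t)"
  by (rule finite_measure_subalgebra_is_sigma_finite)
     (simp add: finite_measure_subalgebra_def finite_measure_subalgebra_axioms_def sub_Q Qp.finite_measure_axioms)

lemma Fs_mono: "s \<le> t \<Longrightarrow> t \<le> U \<Longrightarrow> sets (Fs s) \<subseteq> sets (Fs t)"
proof -
  assume a: "s \<le> t" "t \<le> U"
  have "{X r -` B \<inter> space P | r B. 0 \<le> r \<and> r \<le> s \<and> B \<in> sets S}
      \<subseteq> {X r -` B \<inter> space P | r B. 0 \<le> r \<and> r \<le> t \<and> B \<in> sets S}"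
  proof
    fix A assume "A \<in> {X r -` B \<inter> space P | r B. 0 \<le> r \<and> r \<le> s \<and> B \<in> sets S}"
    then obtain r B where "A = X r -` B \<inter> space P" "0 \<le> r" "r \<le> s" "B \<in> sets S" by blast
    then show "A \<in> {X r -` B \<inter> space P | r B. 0 \<le> r \<and> r \<le> t \<and> B \<in> sets S}"
      using a by (intro CollectI exI[of _ r] exI[of _ B]) auto
  qed
  moreover have sU: "s \<le> U" using a by simp
  ultimately show ?thesis unfolding sets_Fs[OF sU] sets_Fs[OF a(2)]
    by (intro sigma_sets_mono') blast
qed

lemma sub_FF: "s \<le> t \<Longrightarrow> t \<le> U \<Longrightarrow> subalgebra (Fs t) (Fs s)"
  unfolding subalgebra_def using Fs_mono by simp

lemma null_Fs: "t \<le> U \<Longrightarrow> N \<in> null_sets P \<Longrightarrow> N \<in> sets (Fs t)"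
  by (simp add: sets_Fs sigma_sets.Basic)

lemma sigma_of_sub_Fs:
  assumes "0 \<le> t" "t \<le> U"
  shows "subalgebra (Fs t) (sigma_of Q S (X t))"
proof -
  have "A \<in> sets (Fs t)" if "A \<in> sets (sigma_of Q S (X t))" for A
  proof -
    have "X t \<in> space P \<rightarrow> space S" using X_meas assms by (auto simp: measurable_def)
    with that obtain B where B: "B \<in> sets S" "A = X t -` B \<inter> space P"
      unfolding sigma_of_def using Q_space by (auto simp: sets_vimage_algebra2)
    then show ?thesis using assms by (auto simp: sets_Fs intro!: sigma_sets.Basic)
  qed
  then show ?thesis unfolding subalgebra_def sigma_of_def using Q_space by auto
qed

lemma sigma_of_sub_Q:
  assumes "0 \<le> t" "t \<le> U"
  shows "subalgebra Q (sigma_of Q S (X t))"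
  using sigma_of_sub_Fs[OF assms] sub_Q[OF assms(2)] unfolding subalgebra_def by auto

lemma meas_fix:
  fixes f g :: "'a \<Rightarrow> real"
  assumes t: "t \<le> U" and f: "f \<in> borel_measurable P" and g: "g \<in> borel_measurable (Fs t)"
    and ae: "AE \<omega> in P. f \<omega> = g \<omega>"
  shows "f \<in> borel_measurable (Fs t)"
proof -
  have gP: "g \<in> borel_measurable P" using measurable_from_subalg[OF sub_P[OF t] g] .
  define Z where "Z = {\<omega>\<in>space P. f \<omega> \<noteq> g \<omega>}"
  have Zs: "Z \<in> sets P" unfolding Z_def using f gP by measurable
  have Zn: "Z \<in> null_sets P" using ae Zs unfolding Z_def by (simp add: AE_iff_null)
  show ?thesis
  proof (rule measurableI)
    fix B :: "real set" assume B: "B \<in> sets borel"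
    have "f -` B \<inter> space (Fs t) = (g -` B \<inter> space (Fs t) - Z) \<union> (f -` B \<inter> space P \<inter> Z)"
      unfolding Z_def by auto
    moreover have "g -` B \<inter> space (Fs t) \<in> sets (Fs t)" using g B by (rule measurable_sets)
    moreover have "Z \<in> sets (Fs t)" using null_Fs[OF t Zn] .
    moreover have "f -` B \<inter> space P \<inter> Z \<in> sets (Fs t)"
    proof -
      have "f -` B \<inter> space P \<in> sets P" using f B by (rule measurable_sets)
      then have "f -` B \<inter> space P \<inter> Z \<in> null_sets P"
        using Zs by (intro null_sets_subset[OF Zn]) auto
      then show ?thesis by (rule null_Fs[OF t])
    qed
    ultimately show "f -` B \<inter> space (Fs t) \<in> sets (Fs t)"
      by (metis (no_types, lifting) sets.Diff sets.Un space_Fs)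
  qed auto
qed

lemma null_PQ: "A \<in> null_sets P \<longleftrightarrow> A \<in> null_sets Q"
  using Q_equiv Q_sets by (auto simp: null_sets_def)

lemma AE_QP:
  assumes "{\<omega>\<in>space P. \<not> R \<omega>} \<in> sets P" "AE \<omega> in Q. R \<omega>"
  shows "AE \<omega> in P. R \<omega>"
  using assms null_PQ Q_sets Q_space by (simp add: AE_iff_null)

lemma AE_PQ:
  assumes "{\<omega>\<in>space P. \<not> R \<omega>} \<in> sets P" "AE \<omega> in P. R \<omega>"
  shows "AE \<omega> in Q. R \<omega>"
  using assms null_PQ Q_sets Q_space by (simp add: AE_iff_null)

end



context setting begin

lemma Mg_meas: "t \<in> {0..<U} \<Longrightarrow> Mg t \<in> borel_measurable (Fs t)"
  using Mg_mart unfolding martingale_on_def by auto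

lemma Mg0_meas: "0 \<le> t \<Longrightarrow> t \<le> U \<Longrightarrow> Mg 0 \<in> borel_measurable (Fs t)"
  by (rule measurable_from_subalg[OF sub_FF[of 0 t]]) (use Mg_meas[of 0] U_pos in auto)

lemma rho_meas: "r \<in> {0..<U} \<Longrightarrow> (\<lambda>\<omega>. ennreal (Mg r \<omega> / Mg 0 \<omega>)) \<in> borel_measurable (Fs r)"
proof -
  assume r: "r \<in> {0..<U}"
  have [measurable]: "Mg r \<in> borel_measurable (Fs r)" "Mg 0 \<in> borel_measurable (Fs r)"
    using Mg_meas[OF r] Mg0_meas[of r] r by auto
  show ?thesis by measurable
qed

lemma bayes:
  assumes r: "r \<in> {0..<U}" and h: "h \<in> borel_measurable (Fs r)"
  shows "(\<integral>\<^sup>+\<omega>. ennreal (Mg r \<omega> / Mg 0 \<omega>) * h \<omega> \<partial>P) = (\<integral>\<^sup>+\<omega>. h \<omega> \<partial>Q)"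
proof -
  have rU: "r \<le> U" using r by auto
  define \<rho> where "\<rho> = (\<lambda>\<omega>. ennreal (Mg r \<omega> / Mg 0 \<omega>))"
  have \<rho>m: "\<rho> \<in> borel_measurable (Fs r)" unfolding \<rho>_def using rho_meas[OF r] .
  have \<rho>r: "\<rho> \<in> borel_measurable (restr_to_subalg P (Fs r))"
    using measurable_in_subalg[OF sub_P[OF rU] \<rho>m] .
  have eqm: "restr_to_subalg Q (Fs r) = density (restr_to_subalg P (Fs r)) \<rho>"
  proof (rule measure_eqI)
    show "sets (restr_to_subalg Q (Fs r)) = sets (density (restr_to_subalg P (Fs r)) \<rho>)"
      by (simp add: sets_restr_to_subalg sub_Q sub_P rU)
    fix A assume "A \<in> sets (restr_to_subalg Q (Fs r))"
    then have A: "A \<in> sets (Fs r)" by (simp add: sets_restr_to_subalg sub_Q rU)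
    have "emeasure (restr_to_subalg Q (Fs r)) A = emeasure Q A"
      by (rule emeasure_restr_to_subalg[OF sub_Q[OF rU] A])
    also have "\<dots> = (\<integral>\<^sup>+\<omega>. \<rho> \<omega> * indicator A \<omega> \<partial>P)"
      using Q_density r A unfolding \<rho>_def by auto
    also have "\<dots> = (\<integral>\<^sup>+\<omega>. \<rho> \<omega> * indicator A \<omega> \<partial>restr_to_subalg P (Fs r))"
      by (rule nn_integral_subalgebra2[symmetric, OF sub_P[OF rU]]) (use \<rho>m A in measurable)
    also have "\<dots> = emeasure (density (restr_to_subalg P (Fs r)) \<rho>) A"
      by (rule emeasure_density[symmetric, OF \<rho>r]) (simp add: sets_restr_to_subalg sub_P rU A)
    finally show "emeasure (restr_to_subalg Q (Fs r)) A = emeasure (density (restr_to_subalg P (Fs r)) \<rho>) A" .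
  qed
  have "(\<integral>\<^sup>+\<omega>. h \<omega> \<partial>Q) = (\<integral>\<^sup>+\<omega>. h \<omega> \<partial>restr_to_subalg Q (Fs r))"
    by (rule nn_integral_subalgebra2[symmetric, OF sub_Q[OF rU] h])
  also have "\<dots> = (\<integral>\<^sup>+\<omega>. h \<omega> \<partial>density (restr_to_subalg P (Fs r)) \<rho>)" by (simp add: eqm)
  also have "\<dots> = (\<integral>\<^sup>+\<omega>. \<rho> \<omega> * h \<omega> \<partial>restr_to_subalg P (Fs r))"
    by (rule nn_integral_density[OF \<rho>r measurable_in_subalg[OF sub_P[OF rU] h]])
  also have "\<dots> = (\<integral>\<^sup>+\<omega>. \<rho> \<omega> * h \<omega> \<partial>P)"
    by (rule nn_integral_subalgebra2[OF sub_P[OF rU]]) (use \<rho>m h in measurable)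
  finally show ?thesis unfolding \<rho>_def ..
qed

lemma F_sec: "(\<lambda>x. ennreal (F r x)) \<in> borel_measurable S"
proof -
  have "(\<lambda>x. F r x) = (\<lambda>(t,x). F t x) \<circ> (\<lambda>x. (r,x))" by auto
  moreover have "(\<lambda>x. (r,x)) \<in> measurable S (borel \<Otimes>\<^sub>M S)"
    by (rule measurable_Pair1') simp
  ultimately have "(\<lambda>x. F r x) \<in> borel_measurable S"
    using measurable_comp F_meas by metis
  then show ?thesis by measurable
qed

lemma XQ: "t \<in> {0..U} \<Longrightarrow> X t \<in> measurable Q S"
  using X_meas[rule_format, of t] measurable_cong_sets[OF Q_sets refl] by auto

lemma keyK:
  assumes "0 \<le> s" "s \<le> t0" "t0 < U" "0 \<le> u" "t0 + u \<le> U" "A \<in> sets (Fs s)"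
  shows "(\<integral>\<^sup>+\<omega>. C t0 u \<omega> * indicator A \<omega> \<partial>Q)
       = (\<integral>\<^sup>+\<omega>. ennreal (F (t0+u) (X (t0+u) \<omega>)) * indicator A \<omega> \<partial>Q)"
proof -
  interpret sf: sigma_finite_subalgebra Q "Fs t0" using sfs_Q assms by auto
  define h where "h = (\<lambda>\<omega>. ennreal (F (t0+u) (X (t0+u) \<omega>)))"
  have Xm: "X (t0+u) \<in> measurable Q S" using XQ assms by auto
  have hm: "h \<in> borel_measurable Q"
    unfolding h_def using measurable_comp[OF Xm F_sec] by (simp add: comp_def)
  have A: "A \<in> sets (Fs t0)" using Fs_mono[of s t0] assms by auto
  have "AE \<omega> in Q. C t0 u \<omega> = nn_cond_exp Q (sigma_of Q S (X t0)) h \<omega>"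
    using C_version assms unfolding h_def by auto
  moreover have "AE \<omega> in Q. nn_cond_exp Q (Fs t0) h \<omega> = nn_cond_exp Q (sigma_of Q S (X t0)) h \<omega>"
    using X_markov_Q[unfolded markov_on_def, rule_format, of t0 "t0+u" "\<lambda>x. ennreal (F (t0+u) x)"]
      assms F_sec[of "t0+u"] unfolding h_def by auto
  ultimately have "AE \<omega> in Q. C t0 u \<omega> * indicator A \<omega> = indicator A \<omega> * nn_cond_exp Q (Fs t0) h \<omega>"
    by (auto simp: mult.commute)
  then have "(\<integral>\<^sup>+\<omega>. C t0 u \<omega> * indicator A \<omega> \<partial>Q) = (\<integral>\<^sup>+\<omega>. indicator A \<omega> * nn_cond_exp Q (Fs t0) h \<omega> \<partial>Q)"
    by (rule nn_integral_cong_AE)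
  also have "\<dots> = (\<integral>\<^sup>+\<omega>. indicator A \<omega> * h \<omega> \<partial>Q)"
    by (rule sf.nn_cond_exp_intg[OF _ hm]) (use A in measurable)
  finally show ?thesis unfolding h_def by (simp add: mult.commute)
qed

lemma c_meas:
  assumes "0 \<le> s" "s \<le> U"
  shows "(\<lambda>(u,\<omega>). C s u \<omega> * ennreal (w T (u - T + s)) * indicator {T - s..U - s} u)
           \<in> borel_measurable (lborel \<Otimes>\<^sub>M Q)"
proof -
  have e: "sets (lborel \<Otimes>\<^sub>M Q) = sets (lborel \<Otimes>\<^sub>M P)"
    by (rule sets_pair_measure_cong[OF refl Q_sets])
  have C1: "(\<lambda>(u,\<omega>). C s u \<omega>) \<in> borel_measurable (lborel \<Otimes>\<^sub>M Q)"
    using C_meas[rule_format, of s] assms measurable_cong_sets[OF e refl] by auto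
  have "(\<lambda>u::real. (T, u - T + s)) \<in> measurable borel (borel \<Otimes>\<^sub>M borel)" by measurable
  then have "(\<lambda>(t,u). w t u) \<circ> (\<lambda>u::real. (T, u - T + s)) \<in> borel_measurable borel"
    using measurable_comp w_meas by blast
  then have w1: "(\<lambda>u. w T (u - T + s)) \<in> borel_measurable borel" by (simp add: comp_def)
  have w2: "(\<lambda>(u,\<omega>). ennreal (w T (u - T + s)) * indicator {T - s..U - s} u) \<in> borel_measurable (lborel \<Otimes>\<^sub>M Q)"
    using w1 by measurable
  show ?thesis using borel_measurable_times_ennreal[OF C1 w2] by (simp add: split_beta mult.assoc)
qed

lemma Yenn_eq: "Yenn C w U s T \<omega> = (\<integral>\<^sup>+u. C s u \<omega> * ennreal (w T (u - T + s)) * indicator {T - s..U - s} u \<partial>lborel)"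
  unfolding Yenn_def ..

lemma Yenn_meas:
  assumes "0 \<le> s" "s \<le> U"
  shows "Yenn C w U s T \<in> borel_measurable Q" "Yenn C w U s T \<in> borel_measurable P"
proof -
  have cm': "(\<lambda>(\<omega>,u). C s u \<omega> * ennreal (w T (u - T + s)) * indicator {T - s..U - s} u) \<in> borel_measurable (Q \<Otimes>\<^sub>M lborel)"
    using measurable_pair_swap[OF c_meas[OF assms, of T]] by simp
  show "Yenn C w U s T \<in> borel_measurable Q"
    unfolding Yenn_eq using lborel.borel_measurable_nn_integral[OF cm'] by simp
  then show "Yenn C w U s T \<in> borel_measurable P"
    using measurable_cong_sets[OF Q_sets refl] by auto
qed

end



context setting begin

lemma Y_measP: "0 \<le> s \<Longrightarrow> s \<le> U \<Longrightarrow> Y s T \<in> borel_measurable P"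
  using Yenn_meas(2)[of s T] unfolding Y_def Yr_def[abs_def] by measurable

lemma Y_Fs:
  assumes "0 \<le> s" "s \<le> T" "T < U"
  shows "Y s T \<in> borel_measurable (Fs s)"
proof -
  have sU: "s \<le> U" using assms by auto
  define G where "G = sigma_of Q S (X s)"
  define c where "c = (\<lambda>u \<omega>. C s u \<omega> * ennreal (w T (u - T + s)) * indicator {T - s..U - s} u)"
  have cG: "c u \<in> borel_measurable G" for u
  proof (cases "u \<in> {T - s..U - s}")
    case True
    then have "C s u \<in> borel_measurable G" using C_version assms unfolding G_def by auto
    then show ?thesis unfolding c_def by measurable
  next
    case False then have "c u = (\<lambda>\<omega>. 0)" unfolding c_def by (auto simp: fun_eq_iff)
    then show ?thesis by simp
  qed
  have cm: "(\<lambda>(u,\<omega>). c u \<omega>) \<in> borel_measurable (lborel \<Otimes>\<^sub>M Q)"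
    unfolding c_def using c_meas[OF assms(1) sU] .
  have Yfun: "Yenn C w U s T = (\<lambda>\<omega>. \<integral>\<^sup>+u. c u \<omega> \<partial>lborel)"
    by (simp add: fun_eq_iff Yenn_eq c_def)
  have "AE \<omega> in Q. (\<integral>\<^sup>+u. c u \<omega> \<partial>lborel) = nn_cond_exp Q G (\<lambda>\<omega>. \<integral>\<^sup>+u. c u \<omega> \<partial>lborel) \<omega>"
    by (rule cond_fubini_AE[OF Q_prob _ cm cG]) (simp add: G_def sigma_of_sub_Q assms(1) sU)
  then have aeQ: "AE \<omega> in Q. Yenn C w U s T \<omega> = nn_cond_exp Q G (Yenn C w U s T) \<omega>"
    by (simp add: Yfun)
  define N where "N = nn_cond_exp Q G (Yenn C w U s T)"
  have NQ: "N \<in> borel_measurable Q" unfolding N_def by simp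
  have [measurable]: "N \<in> borel_measurable P"
    using NQ measurable_cong_sets[OF Q_sets refl] by auto
  have NG: "N \<in> borel_measurable G" unfolding N_def by simp
  have [measurable]: "Yenn C w U s T \<in> borel_measurable P" using Yenn_meas assms sU by auto
  have Zs: "{\<omega>\<in>space P. \<not> Yenn C w U s T \<omega> = N \<omega>} \<in> sets P" by measurable
  have aeP: "AE \<omega> in P. Yenn C w U s T \<omega> = N \<omega>"
    by (rule AE_QP[OF Zs]) (use aeQ in \<open>simp add: N_def\<close>)
  then have ae2: "AE \<omega> in P. Y s T \<omega> = enn2real (N \<omega>)"
    by eventually_elim (simp add: Y_def Yr_def)
  have "N \<in> borel_measurable (Fs s)"
    using measurable_from_subalg[OF sigma_of_sub_Fs[OF assms(1) sU] NG[unfolded G_def]] .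
  then have g: "(\<lambda>\<omega>. enn2real (N \<omega>)) \<in> borel_measurable (Fs s)" by measurable
  show ?thesis by (rule meas_fix[OF sU Y_measP[OF assms(1) sU] g ae2])
qed

lemma factor:
  fixes f :: "'a \<Rightarrow> ennreal"
  assumes f: "f \<in> borel_measurable (sigma_of Q S (X t))" and t: "0 \<le> t" "t \<le> U"
    and om: "\<omega> \<in> space P" "\<omega>' \<in> space P" "X t \<omega> = X t \<omega>'"
  shows "f \<omega> = f \<omega>'"
proof -
  have Xs: "X t \<in> space P \<rightarrow> space S" using X_meas t by (auto simp: measurable_def)
  have "f -` {f \<omega>} \<inter> space (sigma_of Q S (X t)) \<in> sets (sigma_of Q S (X t))"
    using f by (rule measurable_sets) simp
  then obtain B where "B \<in> sets S" "f -` {f \<omega>} \<inter> space P = X t -` B \<inter> space P"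
    unfolding sigma_of_def using Q_space Xs by (auto simp: sets_vimage_algebra2)
  note eq = this(2)
  have "\<omega> \<in> X t -` B \<inter> space P" using eq om by blast
  then have "\<omega>' \<in> f -` {f \<omega>} \<inter> space P" unfolding eq using om by auto
  then show ?thesis by simp
qed

lemma Y0_const:
  assumes "0 \<le> T" "T < U"
  shows "\<exists>c<\<infinity>. AE \<omega> in P. Yenn C w U 0 T \<omega> = c"
proof -
  obtain x0 where x0: "AE \<omega> in P. X 0 \<omega> = x0" using X0_det by auto
  have fin: "AE \<omega> in P. Yenn C w U 0 T \<omega> < \<infinity>" using Y_finite assms by auto
  have both: "AE \<omega> in P. X 0 \<omega> = x0 \<and> Yenn C w U 0 T \<omega> < \<infinity>" using x0 fin by eventually_elim auto
  have "\<exists>\<omega>0\<in>space P. X 0 \<omega>0 = x0 \<and> Yenn C w U 0 T \<omega>0 < \<infinity>"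
  proof (rule ccontr)
    assume contra: "\<not> ?thesis"
    have "AE \<omega> in P. False"
      by (rule AE_mp[OF both AE_I2]) (use contra in auto)
    then show False by (simp add: prob_space.AE_False[OF P_prob])
  qed
  then obtain \<omega>0 where \<omega>0: "\<omega>0 \<in> space P" "X 0 \<omega>0 = x0" "Yenn C w U 0 T \<omega>0 < \<infinity>" by blast
  have "AE \<omega> in P. Yenn C w U 0 T \<omega> = Yenn C w U 0 T \<omega>0"
  proof (rule AE_mp[OF x0 AE_I2], rule impI)
    fix \<omega> assume om: "\<omega> \<in> space P" "X 0 \<omega> = x0"
    show "Yenn C w U 0 T \<omega> = Yenn C w U 0 T \<omega>0"
      unfolding Yenn_eq
    proof (rule nn_integral_cong)
      fix u
      show "C 0 u \<omega> * ennreal (w T (u - T + 0)) * indicator {T - 0..U - 0} u =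
            C 0 u \<omega>0 * ennreal (w T (u - T + 0)) * indicator {T - 0..U - 0} u"
      proof (cases "u \<in> {T - 0..U - 0}")
        case True
        then have "C 0 u \<in> borel_measurable (sigma_of Q S (X 0))" using C_version assms by auto
        then have "C 0 u \<omega> = C 0 u \<omega>0"
          by (rule factor) (use om \<omega>0 U_pos in auto)
        then show ?thesis by simp
      qed simp
    qed
  qed
  then show ?thesis using \<omega>0 by blast
qed

lemma CQ: "0 \<le> s \<Longrightarrow> 0 \<le> u \<Longrightarrow> s + u \<le> U \<Longrightarrow> C s u \<in> borel_measurable Q"
proof -
  assume a: "0 \<le> s" "0 \<le> u" "s + u \<le> U"
  then have "C s u \<in> borel_measurable (sigma_of Q S (X s))" using C_version by auto
  moreover have "s \<le> U" using a by auto
  ultimately show ?thesis using measurable_from_subalg[OF sigma_of_sub_Q] a by blast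
qed

lemma G_form:
  assumes "0 \<le> t" "t \<le> s" "s \<le> T" "T < U" "A \<in> sets (Fs t)"
  shows "(\<integral>\<^sup>+\<omega>. C s u \<omega> * ennreal (w T (u - T + s)) * indicator {T - s..U - s} u * indicator A \<omega> \<partial>Q)
       = indicator {T - s..U - s} u * ennreal (w T (u - T + s)) *
         (\<integral>\<^sup>+\<omega>. ennreal (F (s+u) (X (s+u) \<omega>)) * indicator A \<omega> \<partial>Q)"
proof (cases "u \<in> {T - s..U - s}")
  case True
  have AQ: "A \<in> sets Q" using sets_Fs_sub[of t] assms Q_sets by auto
  have Cm: "C s u \<in> borel_measurable Q" using CQ True assms by auto
  have "(\<integral>\<^sup>+\<omega>. C s u \<omega> * ennreal (w T (u - T + s)) * indicator {T - s..U - s} u * indicator A \<omega> \<partial>Q)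
      = (\<integral>\<^sup>+\<omega>. ennreal (w T (u - T + s)) * (C s u \<omega> * indicator A \<omega>) \<partial>Q)"
    using True by (intro nn_integral_cong) (simp add: mult_ac)
  also have "\<dots> = ennreal (w T (u - T + s)) * (\<integral>\<^sup>+\<omega>. C s u \<omega> * indicator A \<omega> \<partial>Q)"
    by (rule nn_integral_cmult) (use Cm AQ in measurable)
  also have "(\<integral>\<^sup>+\<omega>. C s u \<omega> * indicator A \<omega> \<partial>Q) = (\<integral>\<^sup>+\<omega>. ennreal (F (s+u) (X (s+u) \<omega>)) * indicator A \<omega> \<partial>Q)"
    by (rule keyK) (use assms True in auto)
  finally show ?thesis using True by simp
qed simp

end



context setting begin

lemma intY:
  assumes "0 \<le> s" "s \<le> U" "A \<in> sets Q"
  shows "(\<integral>\<^sup>+\<omega>. Yenn C w U s T \<omega> * indicator A \<omega> \<partial>Q) =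
         (\<integral>\<^sup>+u. \<integral>\<^sup>+\<omega>. C s u \<omega> * ennreal (w T (u - T + s)) * indicator {T - s..U - s} u * indicator A \<omega> \<partial>Q \<partial>lborel)"
    and "(\<lambda>u. \<integral>\<^sup>+\<omega>. C s u \<omega> * ennreal (w T (u - T + s)) * indicator {T - s..U - s} u * indicator A \<omega> \<partial>Q)
          \<in> borel_measurable borel"
proof -
  interpret Qp': prob_space Q by (rule Q_prob)
  interpret pair_sigma_finite lborel Q ..
  define c where "c = (\<lambda>u \<omega>. C s u \<omega> * ennreal (w T (u - T + s)) * indicator {T - s..U - s} u)"
  have cm: "(\<lambda>(u,\<omega>). c u \<omega>) \<in> borel_measurable (lborel \<Otimes>\<^sub>M Q)"
    unfolding c_def using c_meas[OF assms(1,2)] .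
  have m: "(\<lambda>(u,\<omega>). c u \<omega> * indicator A \<omega>) \<in> borel_measurable (lborel \<Otimes>\<^sub>M Q)"
    using cm assms(3) by measurable
  have cu: "(\<lambda>u. c u \<omega>) \<in> borel_measurable lborel" if "\<omega> \<in> space Q" for \<omega>
    using measurable_comp[OF measurable_Pair2'[OF that] cm] by (simp add: comp_def)
  have Yc: "Yenn C w U s T \<omega> = (\<integral>\<^sup>+u. c u \<omega> \<partial>lborel)" for \<omega>
    by (simp add: Yenn_eq c_def)
  have "(\<integral>\<^sup>+\<omega>. Yenn C w U s T \<omega> * indicator A \<omega> \<partial>Q) = (\<integral>\<^sup>+\<omega>. \<integral>\<^sup>+u. c u \<omega> * indicator A \<omega> \<partial>lborel \<partial>Q)"
    by (intro nn_integral_cong) (simp add: nn_integral_multc[OF cu] Yc)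
  also have "\<dots> = (\<integral>\<^sup>+u. \<integral>\<^sup>+\<omega>. c u \<omega> * indicator A \<omega> \<partial>Q \<partial>lborel)"
    using Fubini'[of "\<lambda>u \<omega>. c u \<omega> * indicator A \<omega>"] m by simp
  finally show "(\<integral>\<^sup>+\<omega>. Yenn C w U s T \<omega> * indicator A \<omega> \<partial>Q) =
         (\<integral>\<^sup>+u. \<integral>\<^sup>+\<omega>. C s u \<omega> * ennreal (w T (u - T + s)) * indicator {T - s..U - s} u * indicator A \<omega> \<partial>Q \<partial>lborel)"
    unfolding c_def .
  show "(\<lambda>u. \<integral>\<^sup>+\<omega>. C s u \<omega> * ennreal (w T (u - T + s)) * indicator {T - s..U - s} u * indicator A \<omega> \<partial>Q)
          \<in> borel_measurable borel"
    using Qp'.borel_measurable_nn_integral[OF m] unfolding c_def by simp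
qed

end



context setting begin

lemma KI:
  assumes "0 \<le> t" "t \<le> T" "T < U" "A \<in> sets (Fs t)"
  shows "(\<integral>\<^sup>+\<omega>. Yenn C w U T T \<omega> * indicator A \<omega> \<partial>Q) = (\<integral>\<^sup>+\<omega>. Yenn C w U t T \<omega> * indicator A \<omega> \<partial>Q)"
proof -
  have AQ: "A \<in> sets Q" using sets_Fs_sub[of t] assms Q_sets by auto
  define Gs where "Gs s u = (\<integral>\<^sup>+\<omega>. C s u \<omega> * ennreal (w T (u - T + s)) * indicator {T - s..U - s} u * indicator A \<omega> \<partial>Q)" for s u
  define \<phi> where "\<phi> r = (\<integral>\<^sup>+\<omega>. ennreal (F r (X r \<omega>)) * indicator A \<omega> \<partial>Q)" for r
  have formT: "Gs T u = indicator {T - T..U - T} u * ennreal (w T (u - T + T)) * \<phi> (T + u)" for u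
    unfolding Gs_def \<phi>_def by (rule G_form) (use assms in auto)
  have formt: "Gs t u = indicator {T - t..U - t} u * ennreal (w T (u - T + t)) * \<phi> (t + u)" for u
    unfolding Gs_def \<phi>_def by (rule G_form) (use assms in auto)
  have shift: "Gs t u = Gs T (t - T + u)" for u
  proof -
    have e1: "(t - T + u) - T + T = u - T + t" by simp
    have e2: "T + (t - T + u) = t + u" by simp
    have e3: "indicator {T - T..U - T} (t - T + u) = (indicator {T - t..U - t} u :: ennreal)"
      by (auto simp: indicator_def)
    show ?thesis unfolding formt formT[of "t - T + u"] e1 e2 e3 ..
  qed
  have GmT: "Gs T \<in> borel_measurable borel"
    unfolding Gs_def using intY(2)[of T A T] assms AQ by simp
  have "(\<integral>\<^sup>+\<omega>. Yenn C w U t T \<omega> * indicator A \<omega> \<partial>Q) = (\<integral>\<^sup>+u. Gs t u \<partial>lborel)"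
    unfolding Gs_def using intY(1)[of t A T] assms AQ by simp
  also have "\<dots> = (\<integral>\<^sup>+u. Gs T (t - T + u) \<partial>lborel)" by (rule nn_integral_cong) (rule shift)
  also have "\<dots> = (\<integral>\<^sup>+u. Gs T u \<partial>lborel)"
    using nn_integral_real_affine[OF GmT, of 1 "t - T"] by simp
  also have "\<dots> = (\<integral>\<^sup>+\<omega>. Yenn C w U T T \<omega> * indicator A \<omega> \<partial>Q)"
    unfolding Gs_def using intY(1)[of T A T] assms AQ by simp
  finally show ?thesis ..
qed

end



context setting begin

lemma Fin:
  assumes "0 \<le> s" "s \<le> T" "T < U"
  shows "(\<integral>\<^sup>+\<omega>. Yenn C w U s T \<omega> \<partial>Q) < \<infinity>"
proof -
  have sp: "(\<integral>\<^sup>+\<omega>. f \<omega> * indicator (space P) \<omega> \<partial>Q) = (\<integral>\<^sup>+\<omega>. f \<omega> \<partial>Q)" for f :: "'a \<Rightarrow> ennreal"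
    using Q_space by (intro nn_integral_cong) simp
  have top: "space P \<in> sets (Fs r)" for r using sets.top[of "Fs r"] by simp
  obtain c where c: "c < \<infinity>" "AE \<omega> in P. Yenn C w U 0 T \<omega> = c"
  proof -
    have "0 \<le> T" using assms by simp
    from Y0_const[OF this assms(3)] show ?thesis using that by blast
  qed
  have [measurable]: "Yenn C w U 0 T \<in> borel_measurable P" using Yenn_meas U_pos by auto
  have "{\<omega>\<in>space P. \<not> Yenn C w U 0 T \<omega> = c} \<in> sets P" by measurable
  then have cQ: "AE \<omega> in Q. Yenn C w U 0 T \<omega> = c" by (rule AE_PQ[OF _ c(2)])
  have T0: "0 \<le> T" using assms by simp
  have "(\<integral>\<^sup>+\<omega>. Yenn C w U s T \<omega> \<partial>Q) = (\<integral>\<^sup>+\<omega>. Yenn C w U T T \<omega> \<partial>Q)"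
    using KI[OF assms top] unfolding sp by (rule sym)
  also have "\<dots> = (\<integral>\<^sup>+\<omega>. Yenn C w U 0 T \<omega> \<partial>Q)"
    using KI[OF order_refl T0 assms(3) top] unfolding sp .
  also have "\<dots> = (\<integral>\<^sup>+\<omega>. c \<partial>Q)" using cQ by (rule nn_integral_cong_AE)
  also have "\<dots> = c" using prob_space.emeasure_space_1[OF Q_prob] by simp
  finally show ?thesis using c(1) by simp
qed

end



lemma alg1: "(p::real) \<noteq> 0 \<Longrightarrow> (a + b*c)/p + b/p*(d - c) = (a + b*d)/p"
  by (simp add: add_divide_distrib[symmetric] algebra_simps)
lemma alg2: "(p::real) \<noteq> 0 \<Longrightarrow> p / m0 * (x / p) * mt = x * (mt / m0)"
  by (cases "m0 = 0") (simp_all add: field_simps)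
lemma alg3: "(p::real) \<noteq> 0 \<Longrightarrow> r \<noteq> 0 \<Longrightarrow> y \<noteq> 0 \<Longrightarrow> (x * r) / (y * r) = (x / p) / (y / p)"
  by (simp add: field_simps)

context setting begin

definition gg :: "real \<Rightarrow> real \<Rightarrow> 'a \<Rightarrow> real" where
  "gg s T \<omega> = (f0 T + f1 T * Y s T \<omega>) * (Mg s \<omega> / Mg 0 \<omega>)"

lemma Y_nonneg: "0 \<le> Y s T \<omega>"
  by (simp add: Y_def Yr_def)

lemma pi0_pos: "0 < 1 + f1 0 * Y 0 0 \<omega>"
proof -
  have "0 < f1 0" using f1_pos U_pos by auto
  then show ?thesis using Y_nonneg[of 0 0 \<omega>] by (simp add: add_pos_nonneg)
qed

lemma num_eq: "P0 T \<omega> + yM T \<omega> * (Y t T \<omega> - Y 0 T \<omega>) = (f0 T + f1 T * Y t T \<omega>) / (1 + f1 0 * Y 0 0 \<omega>)"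
proof -
  have p: "1 + f1 0 * Y 0 0 \<omega> \<noteq> 0" using pi0_pos[of \<omega>] by simp
  show ?thesis unfolding P0_def yM_def using alg1[OF p] by simp
qed

lemma pk_eq: "pk t = gg t t"
proof
  fix \<omega>
  have p: "1 + f1 0 * Y 0 0 \<omega> \<noteq> 0" using pi0_pos[of \<omega>] by simp
  have "pk t \<omega> = (1 + f1 0 * Y 0 0 \<omega>) / Mg 0 \<omega> * ((f0 t + f1 t * Y t t \<omega>) / (1 + f1 0 * Y 0 0 \<omega>)) * Mg t \<omega>"
    unfolding pk_def pi0_def num_eq ..
  also have "\<dots> = gg t t \<omega>" unfolding gg_def using alg2[OF p] by simp
  finally show "pk t \<omega> = gg t t \<omega>" .
qed

lemma gg_pos:
  assumes "0 \<le> s" "s \<le> T" "T < U"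
  shows "AE \<omega> in P. 0 < gg s T \<omega>"
proof -
  have "AE \<omega> in P. 0 < Mg s \<omega>" "AE \<omega> in P. 0 < Mg 0 \<omega>" using Mg_pos assms U_pos by auto
  then show ?thesis
  proof eventually_elim
    case (elim \<omega>)
    have "0 < f0 T" "0 < f1 T" using f0_pos f1_pos assms by auto
    then have "0 < f0 T + f1 T * Y s T \<omega>" using Y_nonneg[of s T \<omega>] by (simp add: add_pos_nonneg)
    then show ?case unfolding gg_def using elim by simp
  qed
qed

lemma gg_Fs:
  assumes "0 \<le> s" "s \<le> T" "T < U"
  shows "gg s T \<in> borel_measurable (Fs s)" "gg s T \<in> borel_measurable P"
proof -
  have [measurable]: "Y s T \<in> borel_measurable (Fs s)" by (rule Y_Fs[OF assms(1-3)])
  have [measurable]: "Mg s \<in> borel_measurable (Fs s)" "Mg 0 \<in> borel_measurable (Fs s)"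
    using Mg_meas Mg0_meas assms by auto
  show "gg s T \<in> borel_measurable (Fs s)" unfolding gg_def[abs_def] by measurable
  moreover have "s \<le> U" using assms by auto
  ultimately show "gg s T \<in> borel_measurable P" using measurable_from_subalg[OF sub_P] by blast
qed

lemma NI:
  assumes "0 \<le> s" "s \<le> T" "T < U" "A \<in> sets (Fs s)"
  shows "(\<integral>\<^sup>+\<omega>. ennreal (indicator A \<omega> * gg s T \<omega>) \<partial>P)
       = ennreal (f0 T) * emeasure Q A + ennreal (f1 T) * (\<integral>\<^sup>+\<omega>. Yenn C w U s T \<omega> * indicator A \<omega> \<partial>Q)"
proof -
  have sU: "s \<le> U" using assms by auto
  have AQ: "A \<in> sets Q" using sets_Fs_sub[OF sU] assms Q_sets by auto
  have f0: "0 < f0 T" and f1: "0 < f1 T" using f0_pos f1_pos assms by auto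
  define h where "h = (\<lambda>\<omega>. ennreal (indicator A \<omega> * (f0 T + f1 T * Y s T \<omega>)))"
  have [measurable]: "Y s T \<in> borel_measurable (Fs s)" by (rule Y_Fs[OF assms(1-3)])
  have hm: "h \<in> borel_measurable (Fs s)" unfolding h_def using assms(4) by measurable
  have "AE \<omega> in P. 0 < Mg s \<omega>" "AE \<omega> in P. 0 < Mg 0 \<omega>" using Mg_pos assms U_pos by auto
  then have "AE \<omega> in P. ennreal (indicator A \<omega> * gg s T \<omega>) = ennreal (Mg s \<omega> / Mg 0 \<omega>) * h \<omega>"
  proof eventually_elim
    case (elim \<omega>)
    have a: "0 \<le> Mg s \<omega> / Mg 0 \<omega>" using elim by simp
    have b: "0 \<le> indicator A \<omega> * (f0 T + f1 T * Y s T \<omega>)"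
      using f0 f1 Y_nonneg[of s T \<omega>] by (simp add: indicator_def)
    have "indicator A \<omega> * gg s T \<omega> = (Mg s \<omega> / Mg 0 \<omega>) * (indicator A \<omega> * (f0 T + f1 T * Y s T \<omega>))"
      unfolding gg_def by simp
    then show ?case unfolding h_def using ennreal_mult[OF a b] by simp
  qed
  then have "(\<integral>\<^sup>+\<omega>. ennreal (indicator A \<omega> * gg s T \<omega>) \<partial>P) = (\<integral>\<^sup>+\<omega>. ennreal (Mg s \<omega> / Mg 0 \<omega>) * h \<omega> \<partial>P)"
    by (rule nn_integral_cong_AE)
  also have "\<dots> = (\<integral>\<^sup>+\<omega>. h \<omega> \<partial>Q)" by (rule bayes[OF _ hm]) (use assms in auto)
  also have "\<dots> = (\<integral>\<^sup>+\<omega>. ennreal (f0 T) * indicator A \<omega> + ennreal (f1 T) * (Yenn C w U s T \<omega> * indicator A \<omega>) \<partial>Q)"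
  proof (rule nn_integral_cong_AE)
    have [measurable]: "Yenn C w U s T \<in> borel_measurable P" using Yenn_meas assms sU by auto
    have "{\<omega>\<in>space P. \<not> Yenn C w U s T \<omega> < \<infinity>} \<in> sets P" by measurable
    moreover have "AE \<omega> in P. Yenn C w U s T \<omega> < \<infinity>" using Y_finite assms by auto
    ultimately have "AE \<omega> in Q. Yenn C w U s T \<omega> < \<infinity>" by (rule AE_PQ)
    then show "AE \<omega> in Q. h \<omega> = ennreal (f0 T) * indicator A \<omega> + ennreal (f1 T) * (Yenn C w U s T \<omega> * indicator A \<omega>)"
    proof eventually_elim
      case (elim \<omega>)
      have e: "ennreal (Y s T \<omega>) = Yenn C w U s T \<omega>"
        using elim by (simp add: Y_def Yr_def ennreal_enn2real)
      show ?case
      proof (cases "\<omega> \<in> A")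
        case True
        have "h \<omega> = ennreal (f0 T + f1 T * Y s T \<omega>)" unfolding h_def using True by simp
        also have "\<dots> = ennreal (f0 T) + ennreal (f1 T) * ennreal (Y s T \<omega>)"
          using f0 f1 Y_nonneg[of s T \<omega>] by (simp add: ennreal_plus ennreal_mult)
        finally show ?thesis using True e by simp
      qed (simp add: h_def)
    qed
  qed
  also have "\<dots> = ennreal (f0 T) * emeasure Q A + ennreal (f1 T) * (\<integral>\<^sup>+\<omega>. Yenn C w U s T \<omega> * indicator A \<omega> \<partial>Q)"
  proof -
    have [measurable]: "Yenn C w U s T \<in> borel_measurable Q" using Yenn_meas assms sU by auto
    show ?thesis
      using AQ by (simp add: nn_integral_add nn_integral_cmult nn_integral_indicator)
  qed
  finally show ?thesis .
qed

lemma gg_int: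
  assumes "0 \<le> s" "s \<le> T" "T < U"
  shows "integrable P (gg s T)"
proof (rule integrableI_nonneg)
  show "gg s T \<in> borel_measurable P" using gg_Fs assms by auto
  show "AE \<omega> in P. 0 \<le> gg s T \<omega>" using gg_pos[OF assms] by eventually_elim simp
  have top: "space P \<in> sets (Fs s)" using sets.top[of "Fs s"] by simp
  have "(\<integral>\<^sup>+\<omega>. ennreal (gg s T \<omega>) \<partial>P) = (\<integral>\<^sup>+\<omega>. ennreal (indicator (space P) \<omega> * gg s T \<omega>) \<partial>P)"
    by (intro nn_integral_cong) simp
  also have "\<dots> = ennreal (f0 T) * emeasure Q (space P) + ennreal (f1 T) * (\<integral>\<^sup>+\<omega>. Yenn C w U s T \<omega> * indicator (space P) \<omega> \<partial>Q)"
    by (rule NI[OF assms top])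
  also have "(\<integral>\<^sup>+\<omega>. Yenn C w U s T \<omega> * indicator (space P) \<omega> \<partial>Q) = (\<integral>\<^sup>+\<omega>. Yenn C w U s T \<omega> \<partial>Q)"
    using Q_space by (intro nn_integral_cong) simp
  also have "emeasure Q (space P) = 1" using prob_space.emeasure_space_1[OF Q_prob] Q_space by simp
  finally show "(\<integral>\<^sup>+\<omega>. ennreal (gg s T \<omega>) \<partial>P) < \<infinity>"
    using Fin[OF assms] by (simp add: ennreal_mult_less_top)
qed

lemma CE:
  assumes "0 \<le> t" "t \<le> T" "T < U"
  shows "AE \<omega> in P. real_cond_exp P (Fs t) (gg T T) \<omega> = gg t T \<omega>"
proof -
  have tU: "t \<le> U" using assms by auto
  interpret sf: sigma_finite_subalgebra P "Fs t" using sfs_P[OF tU] .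
  show ?thesis
  proof (rule sf.real_cond_exp_charact)
    fix A assume A: "A \<in> sets (Fs t)"
    have AT: "A \<in> sets (Fs T)" using Fs_mono[of t T] A assms by auto
    have AP[measurable]: "A \<in> sets P" using sets_Fs_sub[OF tU] A by auto
    have nn: "(\<integral>\<^sup>+\<omega>. ennreal (indicator A \<omega> * gg T T \<omega>) \<partial>P) = (\<integral>\<^sup>+\<omega>. ennreal (indicator A \<omega> * gg t T \<omega>) \<partial>P)"
      using NI[OF _ order_refl assms(3) AT] NI[OF assms A] KI[OF assms A] assms by simp
    have [measurable]: "gg T T \<in> borel_measurable P" "gg t T \<in> borel_measurable P"
      using gg_Fs assms by auto
    have i: "(\<integral>x\<in>A. gg r T x \<partial>P) = enn2real (\<integral>\<^sup>+\<omega>. ennreal (indicator A \<omega> * gg r T \<omega>) \<partial>P)"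
      if "r \<in> {t, T}" for r
    proof -
      have [measurable]: "gg r T \<in> borel_measurable P" using that gg_Fs assms by auto
      have "AE \<omega> in P. 0 \<le> indicator A \<omega> * gg r T \<omega>"
        using gg_pos[of r T] that assms by (auto elim!: eventually_mono simp: indicator_def)
      then show ?thesis unfolding set_lebesgue_integral_def
        by (simp add: integral_eq_nn_integral)
    qed
    show "(\<integral>x\<in>A. gg T T x \<partial>P) = (\<integral>x\<in>A. gg t T x \<partial>P)"
      using i[of T] i[of t] nn by simp
  next
    show "integrable P (gg T T)" using gg_int assms by auto
    show "integrable P (gg t T)" using gg_int assms by auto
    show "gg t T \<in> borel_measurable (Fs t)" using gg_Fs assms by auto
  qed
qed

lemma Yenn_mono:
  assumes "0 \<le> s" "s \<le> t"
  shows "Yenn C w U s t \<omega> \<le> Yenn C w U s s \<omega>"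
  unfolding Yenn_eq
proof (rule nn_integral_mono)
  fix u
  show "C s u \<omega> * ennreal (w t (u - t + s)) * indicator {t - s..U - s} u
      \<le> C s u \<omega> * ennreal (w s (u - s + s)) * indicator {s - s..U - s} u"
  proof (cases "u \<in> {t - s..U - s}")
    case True
    have "w t (u - (t - s)) \<le> w (t - (t - s)) u"
      using w_ineq[rule_format, where t=t and u=u and s="t - s"] True assms by auto
    then have "w t (u - t + s) \<le> w s (u - s + s)" by (simp add: algebra_simps)
    moreover have "u \<in> {s - s..U - s}" using True assms by auto
    ultimately show ?thesis using True by (auto intro!: mult_left_mono ennreal_leI)
  qed simp
qed

end



context setting begin

lemma main:
  shows "(\<forall>t\<in>{0..<U}. AE \<omega> in P. 0 < pk t \<omega>) \<and>
         supermartingale_on P Fs {0..<U} pk \<and>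
         (\<forall>t T. 0 \<le> t \<longrightarrow> t \<le> T \<longrightarrow> T < U \<longrightarrow>
            (AE \<omega> in P. real_cond_exp P (Fs t) (pk T) \<omega> / pk t \<omega> =
               (P0 T \<omega> + yM T \<omega> * (Y t T \<omega> - Y 0 T \<omega>)) /
               (P0 t \<omega> + yM t \<omega> * (Y t t \<omega> - Y 0 t \<omega>))))"
proof (intro conjI ballI allI impI)
  fix t assume t: "t \<in> {0..<U}"
  show "AE \<omega> in P. 0 < pk t \<omega>" unfolding pk_eq using gg_pos[of t t] t by auto
next
  show "supermartingale_on P Fs {0..<U} pk"
    unfolding supermartingale_on_def
  proof (intro conjI ballI impI)
    fix t assume t: "t \<in> {0..<U}"
    show "integrable P (pk t)" unfolding pk_eq using gg_int[of t t] t by auto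
    show "pk t \<in> borel_measurable (Fs t)" unfolding pk_eq using gg_Fs[of t t] t by auto
  next
    fix s t assume s: "s \<in> {0..<U}" and t: "t \<in> {0..<U}" and st: "s \<le> t"
    have ce: "AE \<omega> in P. real_cond_exp P (Fs s) (gg t t) \<omega> = gg s t \<omega>"
      using CE[of s t] s t st by auto
    have fin: "AE \<omega> in P. Yenn C w U s s \<omega> < \<infinity>" using Y_finite s by auto
    have "AE \<omega> in P. 0 < Mg s \<omega>" "AE \<omega> in P. 0 < Mg 0 \<omega>" using Mg_pos s U_pos by auto
    with ce fin show "AE \<omega> in P. real_cond_exp P (Fs s) (pk t) \<omega> \<le> pk s \<omega>"
      unfolding pk_eq
    proof eventually_elim
      case (elim \<omega>)
      have "Yenn C w U s t \<omega> \<le> Yenn C w U s s \<omega>" using Yenn_mono s st by auto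
      then have Y: "Y s t \<omega> \<le> Y s s \<omega>" unfolding Y_def Yr_def using elim enn2real_mono by auto
      have f0: "f0 t \<le> f0 s" using f0_noninc s t st by auto
      have f1a: "f1 t \<le> f1 s" using f1_noninc s t st by auto
      have "0 < f1 t" using f1_pos t by blast
      then have f1: "f1 t \<le> f1 s" "0 \<le> f1 t" using f1a by auto
      have "f1 t * Y s t \<omega> \<le> f1 s * Y s s \<omega>"
        using f1 Y Y_nonneg[of s t \<omega>] by (intro mult_mono) auto
      then have "f0 t + f1 t * Y s t \<omega> \<le> f0 s + f1 s * Y s s \<omega>" using f0 by simp
      moreover have "0 \<le> Mg s \<omega> / Mg 0 \<omega>" using elim by simp
      ultimately have "gg s t \<omega> \<le> gg s s \<omega>" unfolding gg_def by (rule mult_right_mono)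
      then show ?case using elim by simp
    qed
  qed
next
  fix t T :: real assume a: "0 \<le> t" "t \<le> T" "T < U"
  have ce: "AE \<omega> in P. real_cond_exp P (Fs t) (gg T T) \<omega> = gg t T \<omega>" using CE a by auto
  have "AE \<omega> in P. 0 < Mg t \<omega>" "AE \<omega> in P. 0 < Mg 0 \<omega>" using Mg_pos a U_pos by auto
  with ce show "AE \<omega> in P. real_cond_exp P (Fs t) (pk T) \<omega> / pk t \<omega> =
               (P0 T \<omega> + yM T \<omega> * (Y t T \<omega> - Y 0 T \<omega>)) /
               (P0 t \<omega> + yM t \<omega> * (Y t t \<omega> - Y 0 t \<omega>))"
    unfolding pk_eq
  proof eventually_elim
    case (elim \<omega>)
    have p: "1 + f1 0 * Y 0 0 \<omega> \<noteq> 0" using pi0_pos[of \<omega>] by simp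
    have r: "Mg t \<omega> / Mg 0 \<omega> \<noteq> 0" using elim by simp
    have "0 < f0 t" "0 < f1 t" using f0_pos f1_pos a by auto
    then have y: "f0 t + f1 t * Y t t \<omega> \<noteq> 0" using Y_nonneg[of t t \<omega>]
      by (smt (verit) mult_nonneg_nonneg)
    show ?case unfolding elim(1) gg_def num_eq alg3[OF p r y] ..
  qed
qed

end

theorem proposition2p1:
  fixes P Q :: "'a measure" and S :: "'b measure"
    and X :: "real \<Rightarrow> 'a \<Rightarrow> 'b" and Fs :: "real \<Rightarrow> 'a measure"
    and Mg :: "real \<Rightarrow> 'a \<Rightarrow> real" and U :: real
    and f0 f1 :: "real \<Rightarrow> real" and F :: "real \<Rightarrow> 'b \<Rightarrow> real"
    and w :: "real \<Rightarrow> real \<Rightarrow> real"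
    and C :: "real \<Rightarrow> real \<Rightarrow> 'a \<Rightarrow> ennreal"
    and Y :: "real \<Rightarrow> real \<Rightarrow> 'a \<Rightarrow> real"
    and pi0 :: "'a \<Rightarrow> real" and P0 yM :: "real \<Rightarrow> 'a \<Rightarrow> real"
    and pk :: "real \<Rightarrow> 'a \<Rightarrow> real"
  assumes P_prob: "prob_space P"
    and P_complete: "complete_measure P"
    and U_pos: "0 < U"
    and X_meas: "\<forall>t\<in>{0..U}. X t \<in> measurable P S"
    and X0_det: "\<exists>x0\<in>space S. AE \<omega> in P. X 0 \<omega> = x0"
    and Fs_def: "\<forall>t. Fs t = aug_nat_filtration P S X t"
    and Fs_rcont: "\<forall>t\<in>{0..<U}. sets (Fs t) = (\<Inter>s\<in>{t<..U}. sets (Fs s))"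
    and X_markov_P: "markov_on P S Fs X U"
    and Mg_mart: "martingale_on P Fs {0..<U} Mg"
    and Mg_pos: "\<forall>t\<in>{0..<U}. AE \<omega> in P. 0 < Mg t \<omega>"
    and Q_prob: "prob_space Q"
    and Q_space: "space Q = space P"
    and Q_sets: "sets Q = sets P"
    and Q_equiv: "\<forall>A\<in>sets P. emeasure P A = 0 \<longleftrightarrow> emeasure Q A = 0"
    and Q_density: "\<forall>t\<in>{0..<U}. \<forall>A\<in>sets (Fs t).
                      emeasure Q A = (\<integral>\<^sup>+ \<omega> \<in> A. ennreal (Mg t \<omega> / Mg 0 \<omega>) \<partial>P)"
    and X_markov_Q: "markov_on Q S Fs X U"
    and f0_pos: "\<forall>t\<in>{0..<U}. 0 < f0 t"
    and f1_pos: "\<forall>t\<in>{0..<U}. 0 < f1 t"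
    and f0_noninc: "\<forall>s t. 0 \<le> s \<longrightarrow> s \<le> t \<longrightarrow> t < U \<longrightarrow> f0 t \<le> f0 s"
    and f1_noninc: "\<forall>s t. 0 \<le> s \<longrightarrow> s \<le> t \<longrightarrow> t < U \<longrightarrow> f1 t \<le> f1 s"
    and F_meas: "(\<lambda>(t, x). F t x) \<in> borel_measurable (borel \<Otimes>\<^sub>M S)"
    and F_pos: "\<forall>t\<in>{0..U}. \<forall>x\<in>space S. 0 < F t x"
    and w_meas: "(\<lambda>(t, u). w t u) \<in> borel_measurable (borel \<Otimes>\<^sub>M borel)"
    and w_pos: "\<forall>t u. 0 \<le> t \<longrightarrow> 0 \<le> u \<longrightarrow> 0 < w t u"
    and w_ineq: "\<forall>t u s. 0 \<le> s \<longrightarrow> s \<le> t \<longrightarrow> s \<le> u \<longrightarrow> w t (u - s) \<le> w (t - s) u"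
    and C_meas: "\<forall>t\<in>{0..U}. (\<lambda>(u, \<omega>). C t u \<omega>) \<in> borel_measurable (lborel \<Otimes>\<^sub>M P)"
    and C_version: "\<forall>t u. 0 \<le> t \<longrightarrow> 0 \<le> u \<longrightarrow> t + u \<le> U \<longrightarrow>
           C t u \<in> borel_measurable (sigma_of Q S (X t)) \<and>
           (AE \<omega> in Q. C t u \<omega> =
              nn_cond_exp Q (sigma_of Q S (X t)) (\<lambda>\<omega>. ennreal (F (t + u) (X (t + u) \<omega>))) \<omega>)"
    and Y_finite: "\<forall>t T. 0 \<le> t \<longrightarrow> t \<le> T \<longrightarrow> T < U \<longrightarrow> (AE \<omega> in P. Yenn C w U t T \<omega> < \<infinity>)"
    and Y_def: "Y = Yr C w U"
    and pi0_def: "pi0 = (\<lambda>\<omega>. 1 + f1 0 * Y 0 0 \<omega>)"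
    and P0_def: "P0 = (\<lambda>t \<omega>. (f0 t + f1 t * Y 0 t \<omega>) / (1 + f1 0 * Y 0 0 \<omega>))"
    and yM_def: "yM = (\<lambda>t \<omega>. f1 t / (1 + f1 0 * Y 0 0 \<omega>))"
    and pk_def: "pk = (\<lambda>t \<omega>. pi0 \<omega> / Mg 0 \<omega> *
                          (P0 t \<omega> + yM t \<omega> * (Y t t \<omega> - Y 0 t \<omega>)) * Mg t \<omega>)"
  shows "(\<forall>t\<in>{0..<U}. AE \<omega> in P. 0 < pk t \<omega>) \<and>
         supermartingale_on P Fs {0..<U} pk \<and>
         (\<forall>t T. 0 \<le> t \<longrightarrow> t \<le> T \<longrightarrow> T < U \<longrightarrow>
            (AE \<omega> in P. real_cond_exp P (Fs t) (pk T) \<omega> / pk t \<omega> =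
               (P0 T \<omega> + yM T \<omega> * (Y t T \<omega> - Y 0 T \<omega>)) /
               (P0 t \<omega> + yM t \<omega> * (Y t t \<omega> - Y 0 t \<omega>))))"
proof -
  interpret setting P Q S X Fs Mg U f0 f1 F w C Y pi0 P0 yM pk
    by (intro setting.intro) (fact assms)+
  show ?thesis by (rule main)
qed

end
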